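(* Let $X\subset\mathbb{R}^N$ be a bounded open set, $\Theta$ a uniformly continuous proper elliptic map on $X$, and $u\in\mathrm{USC}(\overline{X})$ be $\Theta$-subharmonic in $X$ with $|u|\le M$ on $X$ for some $M>0$. Extend $u$ by $-\infty$ outside $X$ and for $\varepsilon>0$ define $u^\varepsilon(x):=\sup_{z\in\mathbb{R}^N}\{u(x-z)-\frac{1}{\varepsilon}|z|^2\}$ for $x\in X$. Let $\omega:=2+\sup_{x\in X}|x|^2$. Then for every $\eta>0$ there exists $\bar\varepsilon=\bar\varepsilon(\eta)>0$ such that for every $\varepsilon\in(0,\bar\varepsilon]$ the function $x\mapsto u^\varepsilon(x)+\eta(|x|^2-\omega)$ is $\Theta$-subharmonic in $X_\delta:=\{x\in X:\mathrm{dist}(x,\partial X)>\delta\}$, where $\delta:=\sqrt{2\varepsilon M}$.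
   Context: $\mathcal{S}(N)$: real symmetric $N\times N$ matrices with the usual partial order; $\lambda_i(A)$ eigenvalues. $\mathcal{Q}:=\{(s,P): s\le0,\ P\ge0\}$. A proper elliptic map $\Theta$ on $X$ assigns to each $x$ a closed, nonempty set $\Theta(x)\subsetneq\mathbb{R}\times\mathcal{S}(N)$ with $\Theta(x)+\mathcal{Q}\subset\Theta(x)$. $J^+_{x_0}w:=\{(\varphi(x_0),D^2\varphi(x_0)):\varphi$ is $C^2$ near $x_0$, $w\le\varphi$ near $x_0$, $w(x_0)=\varphi(x_0)\}$; $w\in\mathrm{USC}(U)$ is $\Theta$-subharmonic in an open $U\subset X$ if $J^+_{x_0}w\subset\Theta(x_0)$ for all $x_0\in U$. Using the norm $\|(r,A)\|=\max\{|r|,\max_i|\lambda_i(A)|\}$ and the associated Hausdorff distance $d_{\mathcal H}$ on closed subsets (possibly $+\infty$), $\Theta$ is uniformly continuous on $X$ if for every $\eta>0$ there is $\delta>0$ with $d_{\mathcal H}(\Theta(x),\Theta(y))<\eta$ whenever $x,y\in X$, $|x-y|<\delta$. *)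

theory Defs
  imports "HOL-Analysis.Analysis"
begin

definition sym_mat :: "real^'n^'n \<Rightarrow> bool" where
  "sym_mat A \<longleftrightarrow> transpose A = A"

definition mat_le :: "real^'n^'n \<Rightarrow> real^'n^'n \<Rightarrow> bool" where
  "mat_le A B \<longleftrightarrow> (\<forall>v. v \<bullet> (A *v v) \<le> v \<bullet> (B *v v))"

definition eigenvalues :: "real^'n^'n \<Rightarrow> real set" where
  "eigenvalues A = {l. \<exists>v. v \<noteq> 0 \<and> A *v v = l *\<^sub>R v}"

definition eig_norm :: "real^'n^'n \<Rightarrow> real" where
  "eig_norm A = Max ((\<lambda>l. \<bar>l\<bar>) ` eigenvalues A)"

definition jet_norm :: "real \<times> (real^'n^'n) \<Rightarrow> real" where
  "jet_norm p = max \<bar>fst p\<bar> (eig_norm (snd p))"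

definition hausdorff_dist :: "(real \<times> (real^'n^'n)) set \<Rightarrow> (real \<times> (real^'n^'n)) set \<Rightarrow> ereal" where
  "hausdorff_dist S T =
     max (SUP a\<in>S. INF b\<in>T. ereal (jet_norm (a - b)))
         (SUP b\<in>T. INF a\<in>S. ereal (jet_norm (a - b)))"

definition Qcone :: "(real \<times> (real^'n^'n)) set" where
  "Qcone = {(s, P). s \<le> 0 \<and> sym_mat P \<and> mat_le 0 P}"

definition proper_elliptic_map :: "(real^'n) set \<Rightarrow> (real^'n \<Rightarrow> (real \<times> (real^'n^'n)) set) \<Rightarrow> bool" where
  "proper_elliptic_map X Theta \<longleftrightarrow>
     (\<forall>x\<in>X. closed (Theta x) \<and> Theta x \<noteq> {}
        \<and> Theta x \<subseteq> {(r, A). sym_mat A} \<and> Theta x \<noteq> {(r, A). sym_mat A}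
        \<and> (\<forall>p\<in>Theta x. \<forall>q\<in>Qcone. p + q \<in> Theta x))"

definition unif_cont_elliptic_map :: "(real^'n) set \<Rightarrow> (real^'n \<Rightarrow> (real \<times> (real^'n^'n)) set) \<Rightarrow> bool" where
  "unif_cont_elliptic_map X Theta \<longleftrightarrow>
     (\<forall>\<eta>>0. \<exists>\<delta>>0. \<forall>x\<in>X. \<forall>y\<in>X. dist x y < \<delta> \<longrightarrow> hausdorff_dist (Theta x) (Theta y) < ereal \<eta>)"

definition usc_on :: "(real^'n) set \<Rightarrow> (real^'n \<Rightarrow> real) \<Rightarrow> bool" where
  "usc_on S f \<longleftrightarrow> (\<forall>x\<in>S. \<forall>a. f x < a \<longrightarrow> (\<exists>e>0. \<forall>y\<in>S. dist y x < e \<longrightarrow> f y < a))"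

definition superjet :: "(real^'n \<Rightarrow> real) \<Rightarrow> real^'n \<Rightarrow> (real \<times> (real^'n^'n)) set" where
  "superjet w x0 = {(phi x0, H x0) | phi g H. \<exists>e>0.
      (\<forall>y\<in>ball x0 e. (phi has_derivative (\<lambda>h. g y \<bullet> h)) (at y)
                     \<and> (g has_derivative (\<lambda>h. H y *v h)) (at y))
      \<and> continuous_on (ball x0 e) H
      \<and> (\<forall>y\<in>ball x0 e. w y \<le> phi y) \<and> w x0 = phi x0}"

definition subharmonic :: "(real^'n \<Rightarrow> (real \<times> (real^'n^'n)) set) \<Rightarrow> (real^'n) set \<Rightarrow> (real^'n \<Rightarrow> real) \<Rightarrow> bool" where
  "subharmonic Theta U w \<longleftrightarrow> usc_on U w \<and> (\<forall>x0\<in>U. superjet w x0 \<subseteq> Theta x0)"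

text \<open>Sup-convolution, with u extended by -infinity outside X:
  u^eps(x) = sup_z {u(x-z) - |z|^2/eps} = sup_{y\<in>X} {u(y) - |x-y|^2/eps}.\<close>
definition supconv :: "(real^'n) set \<Rightarrow> (real^'n \<Rightarrow> real) \<Rightarrow> real \<Rightarrow> real^'n \<Rightarrow> real" where
  "supconv X u eps x = Sup {u y - (norm (x - y))\<^sup>2 / eps | y. y \<in> X}"

end

theory Submission
  imports Defs
begin


lemma sym_dot:
  fixes C :: "real^'n^'n"
  assumes "sym_mat C" shows "(C *v x) \<bullet> y = x \<bullet> (C *v y)"
proof -
  have "x \<bullet> (C *v y) = (x v* C) \<bullet> y" by (simp add: dot_lmul_matrix)
  also have "x v* C = transpose C *v x" by simp
  also have "transpose C = C" using assms by (simp add: sym_mat_def)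
  finally show ?thesis by simp
qed

lemma scaleR_matrix_vector:
  fixes A :: "real^'n^'m"
  shows "(c *\<^sub>R A) *v v = c *\<^sub>R (A *v v)"
  by (simp add: matrix_vector_mult_def vec_eq_iff sum_distrib_left mult.assoc)

lemma eig_orth:
  fixes C :: "real^'n^'n"
  assumes "sym_mat C" "C *v v = a *\<^sub>R v" "C *v w = b *\<^sub>R w" "a \<noteq> b"
  shows "v \<bullet> w = 0"
proof -
  have "a * (v \<bullet> w) = (C *v v) \<bullet> w" using assms by simp
  also have "\<dots> = v \<bullet> (C *v w)" using sym_dot[OF assms(1)] by simp
  also have "\<dots> = b * (v \<bullet> w)" using assms by simp
  finally show ?thesis using assms(4) by simp
qed

lemma eig_finite:
  fixes C :: "real^'n^'n"
  assumes "sym_mat C" shows "finite (eigenvalues C)"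
proof (rule ccontr)
  assume inf: "\<not> finite (eigenvalues C)"
  define f where "f l = (SOME v. v \<noteq> 0 \<and> C *v v = l *\<^sub>R v)" for l
  have f: "f l \<noteq> 0 \<and> C *v f l = l *\<^sub>R f l" if "l \<in> eigenvalues C" for l
    using that unfolding f_def eigenvalues_def by (metis (mono_tags, lifting) mem_Collect_eq someI_ex)
  obtain B where B: "finite B" "card B = Suc DIM(real^'n)" "B \<subseteq> eigenvalues C"
    using infinite_arbitrarily_large[OF inf] by blast
  have orth: "f a \<bullet> f b = 0" if "a \<in> B" "b \<in> B" "a \<noteq> b" for a b
    using eig_orth[OF assms, of "f a" a "f b" b] f that B(3) by auto
  have inj: "inj_on f B"
  proof
    fix a b assume "a \<in> B" "b \<in> B" "f a = f b"
    then show "a = b" using orth[of a b] f[of a] B(3) by auto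
  qed
  have "independent (f ` B)"
    apply (rule pairwise_orthogonal_independent)
    using orth f B(3) unfolding pairwise_def orthogonal_def by fastforce+
  then have "card (f ` B) \<le> DIM(real^'n)" using independent_bound by blast
  then show False using card_image[OF inj] B(2) by simp
qed

lemma min_eig:
  fixes C :: "real^'n^'n"
  assumes "sym_mat C"
  shows "\<exists>m\<in>eigenvalues C. \<forall>v. m * (v \<bullet> v) \<le> v \<bullet> (C *v v)"
proof -
  let ?q = "\<lambda>v. v \<bullet> (C *v v)"
  have cont: "continuous_on (sphere 0 1) ?q"
    by (intro continuous_intros)
  obtain i :: 'n where True by simp
  have ne: "sphere (0::real^'n) 1 \<noteq> {}"
    using norm_axis_1[of i] by (metis dist_0_norm mem_sphere empty_iff)
  obtain v0 where v0: "v0 \<in> sphere 0 1" "\<forall>y\<in>sphere 0 1. ?q v0 \<le> ?q y"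
    using continuous_attains_inf[OF compact_sphere ne cont] by blast
  define m where "m = ?q v0"
  have v0n: "v0 \<bullet> v0 = 1" using v0(1) by (simp add: dot_square_norm)
  have mle: "m * (v \<bullet> v) \<le> ?q v" for v
  proof (cases "v = 0")
    case True then show ?thesis by simp
  next
    case False
    let ?w = "(1 / norm v) *\<^sub>R v"
    have "?w \<in> sphere 0 1" using False by simp
    then have "m \<le> ?q ?w" using v0 m_def by blast
    also have "?q ?w = ?q v / (norm v)^2"
      by (simp add: matrix_vector_mult_scaleR power2_eq_square)
    finally have "m * (norm v)^2 \<le> ?q v" using False by (simp add: field_simps)
    then show ?thesis by (simp add: dot_square_norm)
  qed
  define D where "D = C - m *\<^sub>R mat 1"
  have Dsym: "sym_mat D" using assms unfolding D_def sym_mat_def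
    by (simp add: transpose_def vec_eq_iff mat_def)
  have Dv: "D *v v = C *v v - m *\<^sub>R v" for v
    by (simp add: D_def matrix_vector_mult_diff_rdistrib scaleR_matrix_vector)
  have qD: "w \<bullet> (D *v w) = ?q w - m * (w \<bullet> w)" for w
    by (simp add: Dv inner_diff_right)
  have Dpos: "0 \<le> w \<bullet> (D *v w)" for w using mle[of w] qD[of w] by simp
  have D0: "v0 \<bullet> (D *v v0) = 0" using qD[of v0] v0n m_def by simp
  define w where "w = D *v v0"
  define c where "c = w \<bullet> (D *v w)"
  have exp: "(v0 + t *\<^sub>R w) \<bullet> (D *v (v0 + t *\<^sub>R w)) = 2 * t * (w \<bullet> w) + t^2 * c" for t
  proof -
    have s: "v0 \<bullet> (D *v w) = w \<bullet> w" using sym_dot[OF Dsym, of v0 w] w_def by (simp add: inner_commute)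
    have s2: "w \<bullet> (D *v v0) = w \<bullet> w" using w_def by simp
    show ?thesis
      by (simp add: matrix_vector_right_distrib matrix_vector_mult_scaleR inner_add_left inner_add_right D0 s s2 c_def power2_eq_square algebra_simps)
  qed
  have ww: "w \<bullet> w = 0"
  proof (rule ccontr)
    assume nz: "w \<bullet> w \<noteq> 0"
    then have p: "w \<bullet> w > 0" by (metis inner_gt_zero_iff inner_eq_zero_iff)
    show False
    proof (cases "c \<le> 0")
      case True
      have "0 \<le> 2 * (-1) * (w \<bullet> w) + (-1)^2 * c" using Dpos[of "v0 + (-1) *\<^sub>R w"] exp[of "-1"] by simp
      then show False using True p by simp
    next
      case False
      define t where "t = - (w \<bullet> w) / c"
      have "0 \<le> 2 * t * (w \<bullet> w) + t^2 * c" using Dpos[of "v0 + t *\<^sub>R w"] exp[of t] by simp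
      also have "\<dots> = - ((w \<bullet> w)^2) / c" using False unfolding t_def by (simp add: field_simps power2_eq_square)
      finally show False using False p by (simp add: divide_nonneg_pos field_simps)
    qed
  qed
  then have "w = 0" by simp
  then have "C *v v0 = m *\<^sub>R v0" using Dv[of v0] w_def by simp
  moreover have "v0 \<noteq> 0" using v0n by auto
  ultimately have "m \<in> eigenvalues C" unfolding eigenvalues_def by blast
  then show ?thesis using mle by blast
qed

lemma eig_lower:
  fixes C :: "real^'n^'n"
  assumes "sym_mat C" "eig_norm C < e"
  shows "- e * (v \<bullet> v) \<le> v \<bullet> (C *v v)"
proof -
  obtain m where m: "m \<in> eigenvalues C" "\<forall>v. m * (v \<bullet> v) \<le> v \<bullet> (C *v v)"
    using min_eig[OF assms(1)] by blast
  have "\<bar>m\<bar> \<le> eig_norm C" unfolding eig_norm_def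
    using eig_finite[OF assms(1)] m(1) by (intro Max_ge) auto
  then have "-e \<le> m" using assms(2) by linarith
  then have "- e * (v \<bullet> v) \<le> m * (v \<bullet> v)" by (intro mult_right_mono) auto
  then show ?thesis using m(2) by (meson order_trans)
qed


lemma usc_add_cont:
  assumes "usc_on S f" "continuous_on S g"
  shows "usc_on S (\<lambda>y. f y + g y)"
  unfolding usc_on_def
proof (intro ballI allI impI)
  fix x a assume x: "x \<in> S" and a: "f x + g x < a"
  define t where "t = a - (f x + g x)"
  have t: "t > 0" using a t_def by simp
  have "f x < f x + t/2" using t by simp
  then obtain e1 where e1: "e1 > 0" "\<forall>y\<in>S. dist y x < e1 \<longrightarrow> f y < f x + t/2"
    using assms(1) x unfolding usc_on_def by blast
  have "t/2 > 0" using t by simp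
  then obtain e2 where e2: "e2 > 0" "\<forall>y\<in>S. dist y x < e2 \<longrightarrow> dist (g y) (g x) < t/2"
    using assms(2) x unfolding continuous_on_iff by blast
  show "\<exists>e>0. \<forall>y\<in>S. dist y x < e \<longrightarrow> f y + g y < a"
  proof (intro exI[of _ "min e1 e2"] conjI ballI impI)
    fix y assume "y \<in> S" "dist y (x) < min e1 e2"
    then have A: "f y < f x + t/2" and "dist (g y) (g x) < t/2" using e1 e2 by auto
    then have "\<bar>g y - g x\<bar> < t/2" by (simp only: dist_real_def)
    moreover have "g y - g x \<le> \<bar>g y - g x\<bar>" by (rule abs_ge_self)
    ultimately have B: "g y < g x + t/2" by linarith
    have "f y + g y < f x + g x + t" using A B by linarith
    then show "f y + g y < a" unfolding t_def by simp
  qed (use e1 e2 in auto)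
qed

lemma usc_cont:
  assumes "continuous_on S g" shows "usc_on S g"
proof -
  have "usc_on S (\<lambda>y. 0)" unfolding usc_on_def by auto
  from usc_add_cont[OF this assms] show ?thesis by simp
qed

lemma usc_mono: "usc_on S f \<Longrightarrow> T \<subseteq> S \<Longrightarrow> usc_on T f"
  unfolding usc_on_def by (meson subsetD)

lemma usc_attains:
  fixes f :: "real^'n \<Rightarrow> real"
  assumes K: "compact K" "K \<noteq> {}" and usc: "usc_on K f" and bd: "\<forall>y\<in>K. f y \<le> B"
  shows "\<exists>y\<in>K. \<forall>z\<in>K. f z \<le> f y"
proof -
  define s where "s = Sup (f ` K)"
  have bdd: "bdd_above (f ` K)" using bd by (auto intro: bdd_aboveI)
  have "\<exists>y\<in>K. s - 1 / (real n + 1) < f y" for n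
  proof -
    have "s - 1 / (real n + 1) < s" by simp
    then show ?thesis using less_cSup_iff[of "f ` K"] K(2) bdd unfolding s_def by auto
  qed
  then obtain ys where ys: "\<And>n. ys n \<in> K" "\<And>n. s - 1 / (real n + 1) < f (ys n)" by metis
  obtain l r where lr: "l \<in> K" "strict_mono r" "(ys \<circ> r) \<longlonglongrightarrow> l"
    using seq_compactE[OF compact_imp_seq_compact[OF K(1)], of ys] ys(1) by blast
  have "s \<le> f l"
  proof (rule ccontr)
    assume "\<not> s \<le> f l"
    then have lt: "f l < s" by simp
    define a where "a = (f l + s) / 2"
    have "f l < a" using lt a_def by simp
    then obtain e where e: "e > 0" "\<forall>y\<in>K. dist y l < e \<longrightarrow> f y < a"
      using usc lr(1) unfolding usc_on_def by blast
    obtain N1 where N1: "\<forall>n\<ge>N1. dist ((ys \<circ> r) n) l < e"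
      using lr(3) e(1) unfolding LIMSEQ_def by blast
    obtain N2 :: nat where N2: "1 / (s - a) < real N2" using reals_Archimedean2 by blast
    define n where "n = max N1 N2"
    have "s - a > 0" using lt a_def by simp
    have "1 / (real (r n) + 1) \<le> 1 / (real n + 1)"
      using seq_suble[OF lr(2), of n] by (simp add: frac_le)
    also have "1 / (real n + 1) < s - a"
    proof -
      have "1 / (s - a) < real n + 1" using N2 n_def by simp
      then show ?thesis using \<open>s - a > 0\<close> by (simp add: field_simps)
    qed
    finally have "a < f (ys (r n))" using ys(2)[of "r n"] by simp
    moreover have "f (ys (r n)) < a" using e(2) N1 n_def ys(1) by simp
    ultimately show False by simp
  qed
  moreover have "\<forall>z\<in>K. f z \<le> s" unfolding s_def using bdd by (simp add: cSup_upper)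
  ultimately have "\<forall>z\<in>K. f z \<le> f l" by auto
  then show ?thesis using lr(1) by blast
qed



lemma norm_sq_diff:
  fixes x1 x2 y :: "real^'n"
  assumes "norm y \<le> R"
  shows "(norm (x2 - y))^2 - (norm (x1 - y))^2 \<le> norm (x1 - x2) * (norm x1 + norm x2 + 2*R)"
proof -
  define a where "a = norm (x2 - y)"
  define b where "b = norm (x1 - y)"
  have ab: "a - b \<le> norm (x1 - x2)"
    using norm_triangle_ineq2[of "x2 - y" "x1 - y"] unfolding a_def b_def
    by (simp add: norm_minus_commute)
  have s: "a + b \<le> norm x1 + norm x2 + 2*R"
    using norm_triangle_ineq4[of x2 y] norm_triangle_ineq4[of x1 y] assms unfolding a_def b_def by simp
  have a0: "a \<ge> 0" "b \<ge> 0" unfolding a_def b_def by simp_all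
  have "a^2 - b^2 = (a - b) * (a + b)" by (simp add: power2_eq_square algebra_simps)
  also have "\<dots> \<le> norm (x1 - x2) * (a + b)" using ab a0 by (intro mult_right_mono) auto
  also have "\<dots> \<le> norm (x1 - x2) * (norm x1 + norm x2 + 2*R)" using s by (intro mult_left_mono) auto
  finally show ?thesis unfolding a_def b_def .
qed

lemma supconv_bdd:
  assumes "\<forall>y\<in>X. u y \<le> M" "\<epsilon> > 0"
  shows "bdd_above {u y - (norm (x - y))\<^sup>2 / \<epsilon> | y. y \<in> X}"
proof (rule bdd_aboveI)
  fix z assume "z \<in> {u y - (norm (x - y))\<^sup>2 / \<epsilon> | y. y \<in> X}"
  then obtain y where "y \<in> X" "z = u y - (norm (x - y))\<^sup>2 / \<epsilon>" by blast
  moreover have "(norm (x - y))\<^sup>2 / \<epsilon> \<ge> 0" using assms(2) by simp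
  ultimately show "z \<le> M" using assms(1) by fastforce
qed

lemma supconv_ge:
  assumes "\<forall>y\<in>X. u y \<le> M" "\<epsilon> > 0" "y \<in> X"
  shows "u y - (norm (x - y))\<^sup>2 / \<epsilon> \<le> supconv X u \<epsilon> x"
  unfolding supconv_def using assms by (intro cSup_upper supconv_bdd) auto

lemma supconv_lip:
  fixes X :: "(real^'n) set"
  assumes "X \<noteq> {}" "\<forall>y\<in>X. norm y \<le> R" "\<forall>y\<in>X. u y \<le> M" "\<epsilon> > 0"
  shows "supconv X u \<epsilon> x1 \<le> supconv X u \<epsilon> x2 + norm (x1 - x2) * (norm x1 + norm x2 + 2*R) / \<epsilon>"
proof -
  let ?L = "norm (x1 - x2) * (norm x1 + norm x2 + 2*R) / \<epsilon>"
  have "Sup {u y - (norm (x1 - y))\<^sup>2 / \<epsilon> | y. y \<in> X} \<le> supconv X u \<epsilon> x2 + ?L"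
  proof (rule cSup_least)
    show "{u y - (norm (x1 - y))\<^sup>2 / \<epsilon> | y. y \<in> X} \<noteq> {}" using assms(1) by blast
  next
    fix z assume "z \<in> {u y - (norm (x1 - y))\<^sup>2 / \<epsilon> | y. y \<in> X}"
    then obtain y where y: "y \<in> X" "z = u y - (norm (x1 - y))\<^sup>2 / \<epsilon>" by blast
    have "(norm (x2 - y))^2 - (norm (x1 - y))^2 \<le> norm (x1 - x2) * (norm x1 + norm x2 + 2*R)"
      using norm_sq_diff assms(2) y(1) by blast
    then have "(norm (x2 - y))^2 / \<epsilon> - (norm (x1 - y))^2 / \<epsilon> \<le> ?L"
      using assms(4) by (simp add: divide_right_mono diff_divide_distrib[symmetric])
    then have "z \<le> u y - (norm (x2 - y))\<^sup>2 / \<epsilon> + ?L" using y by simp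
    also have "\<dots> \<le> supconv X u \<epsilon> x2 + ?L" using supconv_ge[OF assms(3,4) y(1)] by simp
    finally show "z \<le> supconv X u \<epsilon> x2 + ?L" .
  qed
  then show ?thesis unfolding supconv_def by simp
qed

lemma supconv_cont:
  fixes X :: "(real^'n) set"
  assumes "X \<noteq> {}" "bounded X" "\<forall>y\<in>X. u y \<le> M" "\<epsilon> > 0"
  shows "continuous_on S (supconv X u \<epsilon>)"
proof -
  obtain R where R: "\<forall>y\<in>X. norm y \<le> R" using assms(2) unfolding bounded_iff by blast
  have R0: "R \<ge> 0" using R assms(1) by (meson all_not_in_conv norm_ge_zero order_trans)
  show ?thesis unfolding continuous_on_iff
  proof (intro ballI allI impI)
    fix x t assume "x \<in> S" and t: "(t::real) > 0"
    define L0 where "L0 = (2 * norm x + 1 + 2*R) / \<epsilon> + 1"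
    have L0: "L0 > 0" unfolding L0_def using R0 assms(4) by (simp add: add_nonneg_pos)
    define d where "d = min 1 (t / L0)"
    have d: "d > 0" using L0 t d_def by simp
    show "\<exists>d>0. \<forall>x'\<in>S. dist x' x < d \<longrightarrow> dist (supconv X u \<epsilon> x') (supconv X u \<epsilon> x) < t"
    proof (intro exI[of _ d] conjI ballI impI d)
      fix x' assume "x' \<in> S" "dist x' x < d"
      then have dx: "norm (x' - x) < d" by (simp add: dist_norm)
      have nx: "norm x' \<le> norm x + 1" using dx d_def norm_triangle_ineq2[of x' x] by linarith
      have K: "norm (x' - x) * (norm x' + norm x + 2*R) / \<epsilon> \<le> norm (x' - x) * L0"
      proof -
        have "norm (x' - x) * (norm x' + norm x + 2*R) / \<epsilon> \<le> norm (x' - x) * ((2 * norm x + 1 + 2*R) / \<epsilon>)"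
          using nx assms(4) by (simp add: mult_left_mono divide_right_mono)
        also have "\<dots> \<le> norm (x' - x) * L0" unfolding L0_def by (intro mult_left_mono) auto
        finally show ?thesis .
      qed
      have "norm (x' - x) * L0 < t"
      proof -
        have "norm (x' - x) * L0 < d * L0" using dx L0 by simp
        also have "\<dots> \<le> (t / L0) * L0" using L0 d_def by (intro mult_right_mono) auto
        finally show ?thesis using L0 by simp
      qed
      moreover have "supconv X u \<epsilon> x' \<le> supconv X u \<epsilon> x + norm (x' - x) * (norm x' + norm x + 2*R) / \<epsilon>"
        using supconv_lip[OF assms(1) R assms(3,4)] by blast
      moreover have "supconv X u \<epsilon> x \<le> supconv X u \<epsilon> x' + norm (x - x') * (norm x + norm x' + 2*R) / \<epsilon>"
        using supconv_lip[OF assms(1) R assms(3,4)] by blast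
      moreover have "norm (x - x') * (norm x + norm x' + 2*R) / \<epsilon> = norm (x' - x) * (norm x' + norm x + 2*R) / \<epsilon>"
        by (simp add: norm_minus_commute add.commute)
      ultimately show "dist (supconv X u \<epsilon> x') (supconv X u \<epsilon> x) < t"
        using K unfolding dist_real_def abs_less_iff by (intro conjI; linarith)
    qed
  qed
qed



lemma cball_in_X:
  fixes X :: "(real^'n) set"
  assumes "x \<in> X" "infdist x (frontier X) > d" "d \<ge> 0"
  shows "cball x d \<subseteq> X"
proof (rule ccontr)
  assume "\<not> cball x d \<subseteq> X"
  then have "cball x d - X \<noteq> {}" by blast
  moreover have "x \<in> cball x d \<inter> X" using assms(1,3) by auto
  then have "cball x d \<inter> X \<noteq> {}" by blast
  ultimately have "cball x d \<inter> frontier X \<noteq> {}"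
    using connected_Int_frontier[OF connected_cball] by blast
  then obtain f where f: "f \<in> frontier X" "dist x f \<le> d" by auto
  have "infdist x (frontier X) \<le> dist x f" using infdist_le[OF f(1)] .
  then show False using f(2) assms(2) by simp
qed

lemma supconv_attain:
  fixes X :: "(real^'n) set"
  assumes "usc_on (closure X) u" "\<forall>x\<in>X. \<bar>u x\<bar> \<le> M" "\<epsilon> > 0" "M > 0" "x \<in> X"
    "infdist x (frontier X) > sqrt (2*\<epsilon>*M)"
  shows "\<exists>y\<in>X. dist x y \<le> sqrt (2*\<epsilon>*M) \<and> supconv X u \<epsilon> x = u y - (norm (x - y))\<^sup>2 / \<epsilon>"
proof -
  define d where "d = sqrt (2*\<epsilon>*M)"
  have d0: "d \<ge> 0" unfolding d_def using assms(3,4) by simp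
  have d2: "d^2 = 2*\<epsilon>*M" unfolding d_def using assms(3,4) by simp
  have KX: "cball x d \<subseteq> X" using cball_in_X[OF assms(5)] assms(6) d0 unfolding d_def by blast
  define F where "F y = u y + (- (norm (x - y))\<^sup>2 / \<epsilon>)" for y
  have uscK: "usc_on (cball x d) u" using usc_mono[OF assms(1)] KX closure_subset by blast
  have "continuous_on (cball x d) (\<lambda>y. - (norm (x - y))\<^sup>2 / \<epsilon>)" using assms(3) by (intro continuous_intros) auto
  from usc_add_cont[OF uscK this] have uscF: "usc_on (cball x d) F" unfolding F_def by simp
  have bdF: "\<forall>y\<in>cball x d. F y \<le> M"
  proof
    fix y assume "y \<in> cball x d"
    then have "u y \<le> M" using KX assms(2) by force
    moreover have "(norm (x - y))\<^sup>2 / \<epsilon> \<ge> 0" using assms(3) by simp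
    ultimately show "F y \<le> M" unfolding F_def by simp
  qed
  obtain y0 where y0: "y0 \<in> cball x d" "\<forall>z\<in>cball x d. F z \<le> F y0"
    using usc_attains[OF compact_cball _ uscF bdF] d0 by auto
  have all: "F y \<le> F y0" if "y \<in> X" for y
  proof (cases "y \<in> cball x d")
    case True then show ?thesis using y0 by blast
  next
    case False
    then have "dist x y > d" by simp
    then have "(norm (x - y))^2 > d^2" using d0 by (simp add: dist_norm power_strict_mono)
    then have "(norm (x - y))^2 / \<epsilon> > 2 * M" using d2 assms(3) by (simp add: field_simps)
    moreover have "u y \<le> M" using assms(2) that by force
    ultimately have "F y < - M" unfolding F_def by simp
    also have "- M \<le> F x" unfolding F_def using assms(2,5) by force
    also have "F x \<le> F y0" using y0(2) d0 by simp
    finally show ?thesis by simp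
  qed
  have "supconv X u \<epsilon> x = F y0" unfolding supconv_def
  proof (rule cSup_eq_maximum)
    show "F y0 \<in> {u y - (norm (x - y))\<^sup>2 / \<epsilon> | y. y \<in> X}" using y0(1) KX unfolding F_def by force
  next
    fix z assume "z \<in> {u y - (norm (x - y))\<^sup>2 / \<epsilon> | y. y \<in> X}"
    then obtain y where "y \<in> X" "z = F y" unfolding F_def by force
    then show "z \<le> F y0" using all by simp
  qed
  then show ?thesis using y0(1) KX unfolding F_def d_def by force
qed



lemma shift_der:
  fixes phi :: "real^'n \<Rightarrow> real" and g :: "real^'n \<Rightarrow> real^'n" and H :: "real^'n \<Rightarrow> real^'n^'n"
  assumes "(phi has_derivative (\<lambda>h. g (y + z0) \<bullet> h)) (at (y + z0))"
    "(g has_derivative (\<lambda>h. H (y + z0) *v h)) (at (y + z0))"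
  shows "((\<lambda>y. phi (y + z0) - \<eta> * ((norm (y + z0))\<^sup>2 - W) + c) has_derivative
           (\<lambda>h. (g (y + z0) - (2*\<eta>) *\<^sub>R (y + z0)) \<bullet> h)) (at y)"
    and "((\<lambda>y. g (y + z0) - (2*\<eta>) *\<^sub>R (y + z0)) has_derivative
           (\<lambda>h. (H (y + z0) - (2*\<eta>) *\<^sub>R mat 1) *v h)) (at y)"
proof -
  have tr: "((\<lambda>y. y + z0) has_derivative (\<lambda>h. h)) (at y)"
    by (auto intro!: derivative_eq_intros)
  have p: "((\<lambda>y. phi (y + z0)) has_derivative (\<lambda>h. g (y + z0) \<bullet> h)) (at y)"
    using has_derivative_compose[OF tr assms(1)] by simp
  have gg: "((\<lambda>y. g (y + z0)) has_derivative (\<lambda>h. H (y + z0) *v h)) (at y)"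
    using has_derivative_compose[OF tr assms(2)] by simp
  have n: "((\<lambda>y. (y + z0) \<bullet> (y + z0)) has_derivative (\<lambda>h. 2 * ((y + z0) \<bullet> h))) (at y)"
    by (rule derivative_eq_intros tr | simp add: inner_commute)+
  have eqn: "(\<lambda>y. phi (y + z0) - \<eta> * ((norm (y + z0))\<^sup>2 - W) + c) = (\<lambda>y. phi (y + z0) - \<eta> * ((y + z0) \<bullet> (y + z0) - W) + c)"
    by (simp add: power2_norm_eq_inner)
  show "((\<lambda>y. phi (y + z0) - \<eta> * ((norm (y + z0))\<^sup>2 - W) + c) has_derivative
           (\<lambda>h. (g (y + z0) - (2*\<eta>) *\<^sub>R (y + z0)) \<bullet> h)) (at y)"
    unfolding eqn
    by (rule derivative_eq_intros p n | simp add: inner_diff_left algebra_simps)+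
  show "((\<lambda>y. g (y + z0) - (2*\<eta>) *\<^sub>R (y + z0)) has_derivative
           (\<lambda>h. (H (y + z0) - (2*\<eta>) *\<^sub>R mat 1) *v h)) (at y)"
    by (rule derivative_eq_intros gg tr | simp add: matrix_vector_mult_diff_rdistrib scaleR_matrix_vector)+
qed



lemma sym_diff: "sym_mat A \<Longrightarrow> sym_mat B \<Longrightarrow> sym_mat (A - B)"
  unfolding sym_mat_def by (simp add: transpose_def vec_eq_iff)

lemma sym_add_id: "sym_mat A \<Longrightarrow> sym_mat (A + c *\<^sub>R mat 1)"
  unfolding sym_mat_def by (simp add: transpose_def vec_eq_iff mat_def)

theorem lemma5p6:
  fixes X :: "(real^'n) set" and Theta :: "real^'n \<Rightarrow> (real \<times> (real^'n^'n)) set"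
    and u :: "real^'n \<Rightarrow> real" and M :: real
  assumes "bounded X" and "open X"
    and "proper_elliptic_map X Theta" and "unif_cont_elliptic_map X Theta"
    and "usc_on (closure X) u"
    and "subharmonic Theta X u"
    and "M > 0" and "\<forall>x\<in>X. \<bar>u x\<bar> \<le> M"
  shows "\<forall>\<eta>>0. \<exists>\<epsilon>0>0. \<forall>\<epsilon>. 0 < \<epsilon> \<and> \<epsilon> \<le> \<epsilon>0 \<longrightarrow>
           subharmonic Theta {x\<in>X. infdist x (frontier X) > sqrt (2 * \<epsilon> * M)}
             (\<lambda>x. supconv X u \<epsilon> x + \<eta> * ((norm x)\<^sup>2 - (2 + Sup ((\<lambda>x. (norm x)\<^sup>2) ` X))))"
proof (intro allI impI)
  fix \<eta> :: real assume \<eta>: "\<eta> > 0"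
  obtain du where du: "du > 0"
    "\<forall>x\<in>X. \<forall>y\<in>X. dist x y < du \<longrightarrow> hausdorff_dist (Theta x) (Theta y) < ereal \<eta>"
    using assms(4) \<eta> unfolding unif_cont_elliptic_map_def by blast
  define e0 where "e0 = du^2 / (4*M)"
  have e0: "e0 > 0" unfolding e0_def using du assms(7) by simp
  have uM: "\<forall>y\<in>X. u y \<le> M" using assms(8) by force
  obtain R where R: "\<forall>y\<in>X. norm y \<le> R" using assms(1) unfolding bounded_iff by blast
  have bddn: "bdd_above ((\<lambda>x. (norm x)\<^sup>2) ` X)"
  proof (rule bdd_aboveI)
    fix z assume "z \<in> (\<lambda>x. (norm x)\<^sup>2) ` X"
    then obtain y where "y \<in> X" "z = (norm y)^2" by blast
    then show "z \<le> R^2" using R by (simp add: power_mono)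
  qed
  define \<omega> where "\<omega> = 2 + Sup ((\<lambda>x. (norm x)\<^sup>2) ` X)"
  have om: "(norm x)\<^sup>2 - \<omega> \<le> -2" if "x \<in> X" for x
    unfolding \<omega>_def using cSup_upper[OF imageI[OF that] bddn] by simp
  have PE: "\<And>x. x \<in> X \<Longrightarrow> Theta x \<subseteq> {(r, A). sym_mat A} \<and> (\<forall>p\<in>Theta x. \<forall>q\<in>Qcone. p + q \<in> Theta x)"
    using assms(3) unfolding proper_elliptic_map_def by blast
  show "\<exists>\<epsilon>0>0. \<forall>\<epsilon>. 0 < \<epsilon> \<and> \<epsilon> \<le> \<epsilon>0 \<longrightarrow>
           subharmonic Theta {x\<in>X. infdist x (frontier X) > sqrt (2 * \<epsilon> * M)}
             (\<lambda>x. supconv X u \<epsilon> x + \<eta> * ((norm x)\<^sup>2 - (2 + Sup ((\<lambda>x. (norm x)\<^sup>2) ` X))))"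
  proof (intro exI[of _ e0] conjI allI impI e0)
    fix \<epsilon> :: real assume \<epsilon>: "0 < \<epsilon> \<and> \<epsilon> \<le> e0"
    define d where "d = sqrt (2 * \<epsilon> * M)"
    have d0: "d \<ge> 0" unfolding d_def using \<epsilon> assms(7) by simp
    have "d^2 = 2 * \<epsilon> * M" unfolding d_def using \<epsilon> assms(7) by simp
    also have "\<dots> \<le> 2 * e0 * M" using \<epsilon> assms(7) by simp
    also have "\<dots> < du^2" unfolding e0_def using assms(7) du by (simp add: field_simps)
    finally have ddu: "d < du" using du by (meson abs_of_pos less_le power2_less_imp_less)
    define U where "U = {x\<in>X. infdist x (frontier X) > sqrt (2 * \<epsilon> * M)}"
    define v where "v = (\<lambda>x. supconv X u \<epsilon> x + \<eta> * ((norm x)\<^sup>2 - \<omega>))"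
    have "subharmonic Theta U v"
      unfolding subharmonic_def
    proof
      show "usc_on U v"
      proof (cases "X = {}")
        case True then show ?thesis unfolding U_def usc_on_def by simp
      next
        case False
        have "continuous_on U (supconv X u \<epsilon>)" using supconv_cont[OF False assms(1) uM] \<epsilon> by blast
        then have "continuous_on U v" unfolding v_def by (intro continuous_intros)
        then show ?thesis by (rule usc_cont)
      qed
    next
      show "\<forall>x0\<in>U. superjet v x0 \<subseteq> Theta x0"
      proof (intro ballI subsetI)
        fix x0 j assume x0: "x0 \<in> U" and j: "j \<in> superjet v x0"
        obtain phi g H e where jdef: "j = (phi x0, H x0)" and e: "e > 0"
          and der: "\<forall>y\<in>ball x0 e. (phi has_derivative (\<lambda>h. g y \<bullet> h)) (at y)
                     \<and> (g has_derivative (\<lambda>h. H y *v h)) (at y)"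
          and contH: "continuous_on (ball x0 e) H"
          and le: "\<forall>y\<in>ball x0 e. v y \<le> phi y" and eq: "v x0 = phi x0"
          using j unfolding superjet_def by blast
        have x0X: "x0 \<in> X" and x0d: "infdist x0 (frontier X) > sqrt (2 * \<epsilon> * M)" using x0 U_def by auto
        obtain y0 where y0X: "y0 \<in> X" and y0d: "dist x0 y0 \<le> sqrt (2 * \<epsilon> * M)"
          and y0s: "supconv X u \<epsilon> x0 = u y0 - (norm (x0 - y0))\<^sup>2 / \<epsilon>"
          using supconv_attain[OF assms(5) assms(8) _ assms(7) x0X x0d] \<epsilon> by blast
        define z0 where "z0 = x0 - y0"
        define c where "c = (norm z0)\<^sup>2 / \<epsilon>"
        have c0: "c \<ge> 0" unfolding c_def using \<epsilon> by simp
        obtain e2 where e2: "e2 > 0" "ball y0 e2 \<subseteq> X" using assms(2) y0X open_contains_ball by blast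
        define e' where "e' = min e e2"
        have e': "e' > 0" using e e2 e'_def by simp
        define psi where "psi = (\<lambda>y. phi (y + z0) - \<eta> * ((norm (y + z0))\<^sup>2 - \<omega>) + c)"
        define g' where "g' = (\<lambda>y. g (y + z0) - (2*\<eta>) *\<^sub>R (y + z0))"
        define H' where "H' = (\<lambda>y. H (y + z0) - (2*\<eta>) *\<^sub>R mat 1)"
        have inb: "y + z0 \<in> ball x0 e" if "y \<in> ball y0 e'" for y
        proof -
          have "dist x0 (y + z0) = dist y0 y" unfolding z0_def dist_norm by (simp add: algebra_simps)
          then show ?thesis using that e'_def by simp
        qed
        have inX: "y \<in> X" if "y \<in> ball y0 e'" for y using that e2 e'_def by auto
        have psi0: "psi y0 = u y0"
        proof -
          have "y0 + z0 = x0" unfolding z0_def by simp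
          then have "psi y0 = v x0 - \<eta> * ((norm x0)\<^sup>2 - \<omega>) + c" unfolding psi_def using eq by simp
          also have "\<dots> = u y0" unfolding v_def y0s c_def z0_def by simp
          finally show ?thesis .
        qed
        have "(psi y0, H' y0) \<in> superjet u y0"
          unfolding superjet_def
        proof (intro CollectI exI conjI)
          show "(psi y0, H' y0) = (psi y0, H' y0)" by simp
          show "e' > 0" by (rule e')
          show "\<forall>y\<in>ball y0 e'. (psi has_derivative (\<lambda>h. g' y \<bullet> h)) (at y) \<and> (g' has_derivative (\<lambda>h. H' y *v h)) (at y)"
          proof
            fix y assume "y \<in> ball y0 e'"
            then have d1: "(phi has_derivative (\<lambda>h. g (y + z0) \<bullet> h)) (at (y + z0))"
              and d2: "(g has_derivative (\<lambda>h. H (y + z0) *v h)) (at (y + z0))"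
              using der inb by auto
            show "(psi has_derivative (\<lambda>h. g' y \<bullet> h)) (at y) \<and> (g' has_derivative (\<lambda>h. H' y *v h)) (at y)"
              unfolding psi_def g'_def H'_def using shift_der[of phi g y z0 H, OF d1 d2] by blast
          qed
          have "continuous_on (ball y0 e') (\<lambda>y. H (y + z0))"
            by (rule continuous_on_compose2[OF contH]) (auto intro!: continuous_intros inb)
          then show "continuous_on (ball y0 e') H'" unfolding H'_def by (intro continuous_intros)
          show "\<forall>y\<in>ball y0 e'. u y \<le> psi y"
          proof
            fix y assume y: "y \<in> ball y0 e'"
            have "u y - (norm ((y + z0) - y))\<^sup>2 / \<epsilon> \<le> supconv X u \<epsilon> (y + z0)"
              using supconv_ge[OF uM _ inX[OF y]] \<epsilon> by blast
            then have "u y \<le> supconv X u \<epsilon> (y + z0) + c" unfolding c_def by simp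
            also have "supconv X u \<epsilon> (y + z0) = v (y + z0) - \<eta> * ((norm (y + z0))\<^sup>2 - \<omega>)"
              unfolding v_def by simp
            also have "v (y + z0) \<le> phi (y + z0)" using le inb[OF y] by blast
            finally show "u y \<le> psi y" unfolding psi_def by simp
          qed
          show "u y0 = psi y0" using psi0 by simp
        qed
        then have aT: "(u y0, H' y0) \<in> Theta y0"
          using assms(6) y0X psi0 unfolding subharmonic_def by auto
        have "dist y0 x0 < du" using y0d ddu d_def by (simp add: dist_commute)
        then have hd: "hausdorff_dist (Theta y0) (Theta x0) < ereal \<eta>" using du(2) y0X x0X by blast
        let ?a = "(u y0, H' y0)"
        have "(INF b\<in>Theta x0. ereal (jet_norm (?a - b))) \<le> (SUP a\<in>Theta y0. INF b\<in>Theta x0. ereal (jet_norm (a - b)))"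
          using aT by (rule SUP_upper)
        also have "\<dots> \<le> hausdorff_dist (Theta y0) (Theta x0)" unfolding hausdorff_dist_def by simp
        finally have "(INF b\<in>Theta x0. ereal (jet_norm (?a - b))) < ereal \<eta>" using hd by simp
        then obtain b where bT: "b \<in> Theta x0" and bj: "ereal (jet_norm (?a - b)) < ereal \<eta>"
          by (auto simp: INF_less_iff)
        obtain r B where rB: "b = (r, B)" by fastforce
        have jn: "jet_norm (?a - b) < \<eta>" using bj by simp
        then have r: "\<bar>u y0 - r\<bar> < \<eta>" and eB: "eig_norm (H' y0 - B) < \<eta>"
          unfolding jet_norm_def rB by auto
        have symH': "sym_mat (H' y0)" using PE[OF y0X] aT by blast
        have symB: "sym_mat B" using PE[OF x0X] bT rB by blast
        have symC: "sym_mat (H' y0 - B)" using sym_diff[OF symH' symB] .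
        have low: "- \<eta> * (w \<bullet> w) \<le> w \<bullet> ((H' y0 - B) *v w)" for w using eig_lower[OF symC eB] .
        have Peq: "H x0 - B = (H' y0 - B) + (2*\<eta>) *\<^sub>R mat 1" unfolding H'_def z0_def by simp
        have phix0: "phi x0 = u y0 - c + \<eta> * ((norm x0)\<^sup>2 - \<omega>)"
          using eq unfolding v_def y0s c_def z0_def by simp
        have "\<eta> * ((norm x0)\<^sup>2 - \<omega>) \<le> \<eta> * (-2)" using om[OF x0X] \<eta> by (intro mult_left_mono) auto
        then have s: "phi x0 - r \<le> 0" using phix0 c0 r by (simp add: abs_less_iff)
        have "(phi x0 - r, H x0 - B) \<in> Qcone"
          unfolding Qcone_def
        proof (intro CollectI case_prodI conjI s)
          show "sym_mat (H x0 - B)" unfolding Peq by (rule sym_add_id[OF symC])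
          show "mat_le 0 (H x0 - B)" unfolding mat_le_def
          proof
            fix w :: "real^'n"
            have "w \<bullet> ((H x0 - B) *v w) = w \<bullet> ((H' y0 - B) *v w) + 2 * \<eta> * (w \<bullet> w)"
              unfolding Peq by (simp add: matrix_vector_mult_add_rdistrib scaleR_matrix_vector inner_add_right)
            also have "\<dots> \<ge> \<eta> * (w \<bullet> w)" using low[of w] by simp
            finally have "w \<bullet> ((H x0 - B) *v w) \<ge> \<eta> * (w \<bullet> w)" .
            moreover have "\<eta> * (w \<bullet> w) \<ge> 0" using \<eta> by simp
            ultimately show "w \<bullet> (0 *v w) \<le> w \<bullet> ((H x0 - B) *v w)" by simp
          qed
        qed
        then have "b + (phi x0 - r, H x0 - B) \<in> Theta x0" using PE[OF x0X] bT by blast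
        then show "j \<in> Theta x0" unfolding jdef rB by simp
      qed
    qed
    then show "subharmonic Theta {x\<in>X. infdist x (frontier X) > sqrt (2 * \<epsilon> * M)}
             (\<lambda>x. supconv X u \<epsilon> x + \<eta> * ((norm x)\<^sup>2 - (2 + Sup ((\<lambda>x. (norm x)\<^sup>2) ` X))))"
      unfolding U_def v_def \<omega>_def .
  qed
qed


end
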